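(* Assume $p_0\in(0,1)$, $p_j\in(0,1)$ and $\tau_j=\frac{p_0}{p_0+2(1-p_0)p_j}$ for $j=1,\dots,k$. Then for all $\Theta=(\theta_1,\dots,\theta_n)$ and $X=(x_1,\dots,x_n)$ in $\mathbb R^{nd}$, $$\mathbb E\|g-\nabla F(X)\|^2\le 2\mathcal L\, D_F(\Theta,X),$$ where $g=(g_1,\dots,g_n)$, the expectation is over $\xi$ and $(l_i)_{i}$, and $D_F(\Theta,X)=F(\Theta)-F(X)-\langle\nabla F(X),\Theta-X\rangle$.
   Context: Clients $1,\dots,n$ are partitioned into nonempty disjoint clusters $\mathcal I_1,\dots,\mathcal I_k$; $d\ge1$. Each $f_i(\theta)=\frac1{n_i}\sum_{l=1}^{n_i}\tilde f_{i,l}(\theta)$ where each $\tilde f_{i,l}:\mathbb R^d\to\mathbb R$ is $\tilde L$-smooth and $\mu$-strongly convex. Fix $\gamma_i>0$ and $\alpha_j\in[0,1]$, not all $\alpha_j=0$. For a vector $\Theta=(\theta_1,\dots,\theta_n)$ define $\bar\theta_j=\frac{\sum_{i\in\mathcal I_j}\gamma_i\theta_i}{\sum_{i\in\mathcal I_j}\gamma_i}$, $\bar\theta=\frac{\sum_{j}\sum_{i\in\mathcal I_j}\alpha_j\gamma_i\theta_i}{\sum_{j}\sum_{i\in\mathcal I_j}\alpha_j\gamma_i}$ (and analogously $\bar x_j,\bar x$ for $X$), and $F(\Theta)=\sum_{j}\sum_{i\in\mathcal I_j}\big(f_i(\theta_i)+\frac{(1-\alpha_j)\gamma_i}{2}\|\theta_i-\bar\theta_j\|^2+\frac{\alpha_j\gamma_i}{2}\|\theta_i-\bar\theta\|^2\big)$.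 Randomness: $\xi_0,\dots,\xi_k$ independent Bernoulli with $\mathbb P(\xi_j=1)=p_j$, and independently for each client $i$ an index $l_i$ uniform on $\{1,\dots,n_i\}$. For $i\in\mathcal I_j$: $$g_i=\nabla f_i(x_i)+\alpha_j\gamma_i(x_i-\bar x)+(1-\alpha_j)\gamma_i(x_i-\bar x_j)+\mathbf 1\{\xi_0=1\}\frac{\gamma_i\alpha_j}{p_0}\big(\theta_i-\bar\theta-(x_i-\bar x)\big)$$ $$+\mathbf 1\{\xi_0=0,\xi_j=1\}\frac{\gamma_i(1-\tau_j)(1-\alpha_j)}{(1-p_0)p_j}\big((\theta_i-\bar\theta_j)-(x_i-\bar x_j)\big)+\mathbf 1\{\xi_0=0,\xi_j=0\}\frac{1}{(1-p_0)(1-p_j)}\big(\nabla\tilde f_{i,l_i}(\theta_i)-\nabla\tilde f_{i,l_i}(x_i)\big).$$ Define $\mathcal L=\max\big\{\frac{2}{p_0}\max_{j}\max_{i\in\mathcal I_j}\alpha_j\gamma_i,\ \max_{j}\frac{2(1-\alpha_j)\max_{i\in\mathcal I_j}\gamma_i}{p_0+2(1-p_0)p_j},\ \frac{\tilde L}{1-p_0}\max_{j}\frac{1}{1-p_j}\big\}$. *)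

theory Defs
  imports "HOL-Analysis.Analysis"
begin

text \<open>Clients are indexed by a finite type 'n, clusters by a finite type 'k,
  parameters live in a Euclidean space 'a (playing the role of R^d).
  A stacked vector (theta_1,...,theta_n) is an element of 'a^'n.
  cl i is the cluster of client i; N i = n_i is the number of local samples;
  ft i l is the l-th local function of client i (l in 1..N i), gt i l its gradient.\<close>

definition loc_f :: "('n \<Rightarrow> nat) \<Rightarrow> ('n \<Rightarrow> nat \<Rightarrow> 'a \<Rightarrow> real) \<Rightarrow> 'n \<Rightarrow> 'a \<Rightarrow> real" where
  "loc_f N ft i x = (\<Sum>l = 1..N i. ft i l x) / real (N i)"

definition loc_grad :: "('n \<Rightarrow> nat) \<Rightarrow> ('n \<Rightarrow> nat \<Rightarrow> 'a \<Rightarrow> 'a) \<Rightarrow> 'n \<Rightarrow> 'a \<Rightarrow> 'a::real_vector" where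
  "loc_grad N gt i x = (\<Sum>l = 1..N i. gt i l x) /\<^sub>R real (N i)"

definition clavg :: "('n::finite \<Rightarrow> 'k) \<Rightarrow> ('n \<Rightarrow> real) \<Rightarrow> ('a::real_vector)^'n \<Rightarrow> 'k \<Rightarrow> 'a" where
  "clavg cl \<gamma> \<Theta> j = (\<Sum>i\<in>{i. cl i = j}. \<gamma> i *\<^sub>R (\<Theta> $ i)) /\<^sub>R (\<Sum>i\<in>{i. cl i = j}. \<gamma> i)"

definition gavg :: "('n::finite \<Rightarrow> 'k) \<Rightarrow> ('k \<Rightarrow> real) \<Rightarrow> ('n \<Rightarrow> real) \<Rightarrow> ('a::real_vector)^'n \<Rightarrow> 'a" where
  "gavg cl \<alpha> \<gamma> \<Theta> = (\<Sum>i\<in>UNIV. (\<alpha> (cl i) * \<gamma> i) *\<^sub>R (\<Theta> $ i)) /\<^sub>R (\<Sum>i\<in>UNIV. \<alpha> (cl i) * \<gamma> i)"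

definition Fobj :: "('n::finite \<Rightarrow> nat) \<Rightarrow> ('n \<Rightarrow> nat \<Rightarrow> 'a \<Rightarrow> real) \<Rightarrow> ('n \<Rightarrow> 'k)
    \<Rightarrow> ('k \<Rightarrow> real) \<Rightarrow> ('n \<Rightarrow> real) \<Rightarrow> ('a::real_normed_vector)^'n \<Rightarrow> real" where
  "Fobj N ft cl \<alpha> \<gamma> \<Theta> = (\<Sum>i\<in>UNIV.
      loc_f N ft i (\<Theta> $ i)
      + (1 - \<alpha> (cl i)) * \<gamma> i / 2 * (norm (\<Theta> $ i - clavg cl \<gamma> \<Theta> (cl i)))\<^sup>2
      + \<alpha> (cl i) * \<gamma> i / 2 * (norm (\<Theta> $ i - gavg cl \<alpha> \<gamma> \<Theta>))\<^sup>2)"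

definition tau :: "real \<Rightarrow> ('k \<Rightarrow> real) \<Rightarrow> 'k \<Rightarrow> real" where
  "tau p0 p j = p0 / (p0 + 2 * (1 - p0) * p j)"

text \<open>the stochastic estimator g = (g_1,...,g_n) for a realisation
  (xi0, xi, l) of the randomness (xi j = xi_j for clusters j, l i = l_i)\<close>
definition gest :: "('n::finite \<Rightarrow> nat) \<Rightarrow> ('n \<Rightarrow> nat \<Rightarrow> 'a \<Rightarrow> 'a) \<Rightarrow> ('n \<Rightarrow> 'k)
    \<Rightarrow> ('k \<Rightarrow> real) \<Rightarrow> ('n \<Rightarrow> real) \<Rightarrow> real \<Rightarrow> ('k \<Rightarrow> real)
    \<Rightarrow> ('a::real_vector)^'n \<Rightarrow> 'a^'n \<Rightarrow> bool \<Rightarrow> ('k \<Rightarrow> bool) \<Rightarrow> ('n \<Rightarrow> nat) \<Rightarrow> 'a^'n" where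
  "gest N gt cl \<alpha> \<gamma> p0 p \<Theta> X \<xi>0 \<xi> l = (\<chi> i.
      loc_grad N gt i (X $ i)
      + (\<alpha> (cl i) * \<gamma> i) *\<^sub>R (X $ i - gavg cl \<alpha> \<gamma> X)
      + ((1 - \<alpha> (cl i)) * \<gamma> i) *\<^sub>R (X $ i - clavg cl \<gamma> X (cl i))
      + (if \<xi>0 then (\<gamma> i * \<alpha> (cl i) / p0) *\<^sub>R
            ((\<Theta> $ i - gavg cl \<alpha> \<gamma> \<Theta>) - (X $ i - gavg cl \<alpha> \<gamma> X)) else 0)
      + (if \<not> \<xi>0 \<and> \<xi> (cl i) then
            (\<gamma> i * (1 - tau p0 p (cl i)) * (1 - \<alpha> (cl i)) / ((1 - p0) * p (cl i))) *\<^sub>R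
            ((\<Theta> $ i - clavg cl \<gamma> \<Theta> (cl i)) - (X $ i - clavg cl \<gamma> X (cl i))) else 0)
      + (if \<not> \<xi>0 \<and> \<not> \<xi> (cl i) then
            (1 / ((1 - p0) * (1 - p (cl i)))) *\<^sub>R (gt i (l i) (\<Theta> $ i) - gt i (l i) (X $ i)) else 0))"

text \<open>Expectation over independent xi_0 ~ Bernoulli(p0), xi_j ~ Bernoulli(p j),
  and independent l_i uniform on {1..N i}, written as an explicit finite sum.\<close>
definition expect :: "('n::finite \<Rightarrow> nat) \<Rightarrow> real \<Rightarrow> ('k::finite \<Rightarrow> real)
    \<Rightarrow> (bool \<Rightarrow> ('k \<Rightarrow> bool) \<Rightarrow> ('n \<Rightarrow> nat) \<Rightarrow> real) \<Rightarrow> real" where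
  "expect N p0 p Z = (\<Sum>\<xi>0\<in>(UNIV::bool set). \<Sum>\<xi>\<in>(UNIV::('k \<Rightarrow> bool) set).
      \<Sum>l\<in>PiE UNIV (\<lambda>i. {1..N i}).
        (if \<xi>0 then p0 else 1 - p0) * (\<Prod>j\<in>UNIV. if \<xi> j then p j else 1 - p j)
        * (\<Prod>i\<in>UNIV. 1 / real (N i)) * Z \<xi>0 \<xi> l)"

definition Lconst :: "('n::finite \<Rightarrow> 'k::finite) \<Rightarrow> ('k \<Rightarrow> real) \<Rightarrow> ('n \<Rightarrow> real) \<Rightarrow> real
    \<Rightarrow> ('k \<Rightarrow> real) \<Rightarrow> real \<Rightarrow> real" where
  "Lconst cl \<alpha> \<gamma> p0 p Lt = max (max
      (2 / p0 * Max (range (\<lambda>j. Max ((\<lambda>i. \<alpha> j * \<gamma> i) ` {i. cl i = j}))))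
      (Max (range (\<lambda>j. 2 * (1 - \<alpha> j) * Max (\<gamma> ` {i. cl i = j}) / (p0 + 2 * (1 - p0) * p j)))))
      (Lt / (1 - p0) * Max (range (\<lambda>j. 1 / (1 - p j))))"

end

theory Submission imports Defs begin

lemma descent:
  fixes f :: "'a::euclidean_space \<Rightarrow> real" and g :: "'a \<Rightarrow> 'a"
  assumes d: "\<And>x. (f has_derivative (\<lambda>h. g x \<bullet> h)) (at x)"
    and L: "\<And>x y. norm (g x - g y) \<le> L * norm (x - y)"
  shows "f z \<le> f y + g y \<bullet> (z - y) + L / 2 * (norm (z - y))\<^sup>2"
proof -
  define \<phi> where "\<phi> t = f (y + t *\<^sub>R (z - y)) - t * (g y \<bullet> (z - y)) - L / 2 * t^2 * (norm (z - y))\<^sup>2" for t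
  define \<phi>' where "\<phi>' t = g (y + t *\<^sub>R (z - y)) \<bullet> (z - y) - g y \<bullet> (z - y) - L * t * (norm (z - y))\<^sup>2" for t
  have D: "DERIV \<phi> t :> \<phi>' t" for t
  proof -
    have "((\<lambda>t. f (y + t *\<^sub>R (z - y))) has_derivative (\<lambda>s. g (y + t *\<^sub>R (z - y)) \<bullet> (s *\<^sub>R (z - y)))) (at t)"
    proof -
      have l: "((\<lambda>t. y + t *\<^sub>R (z - y)) has_derivative (\<lambda>s. s *\<^sub>R (z - y))) (at t)"
        by (auto intro!: derivative_eq_intros)
      show ?thesis using has_derivative_compose[OF l d] by simp
    qed
    then have "((\<lambda>t. f (y + t *\<^sub>R (z - y))) has_field_derivative (g (y + t *\<^sub>R (z - y)) \<bullet> (z - y))) (at t)"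
      unfolding has_field_derivative_def by (simp add: mult.commute[of _ "g _ \<bullet> _"])
    then show ?thesis unfolding \<phi>_def \<phi>'_def
      by (auto intro!: derivative_eq_intros)
  qed
  have neg: "\<phi>' t \<le> 0" if "0 \<le> t" for t
  proof -
    have "(g (y + t *\<^sub>R (z - y)) - g y) \<bullet> (z - y) \<le> norm (g (y + t *\<^sub>R (z - y)) - g y) * norm (z - y)"
      by (rule norm_cauchy_schwarz)
    also have "\<dots> \<le> L * norm (t *\<^sub>R (z - y)) * norm (z - y)"
      using L[of "y + t *\<^sub>R (z - y)" y] by (intro mult_right_mono) auto
    also have "\<dots> = L * t * (norm (z - y))\<^sup>2" using that by (simp add: power2_eq_square)
    finally show ?thesis unfolding \<phi>'_def by (simp add: inner_diff_left)
  qed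
  have "\<phi> 1 \<le> \<phi> 0"
  proof -
    obtain t where "0 < t" "t < 1" "\<phi> 1 - \<phi> 0 = (1 - 0) * \<phi>' t"
      using MVT2[of 0 1 \<phi> \<phi>'] D by auto
    with neg[of t] show ?thesis by simp
  qed
  then show ?thesis unfolding \<phi>_def by simp
qed

lemma cocoercive:
  fixes f :: "'a::euclidean_space \<Rightarrow> real" and g :: "'a \<Rightarrow> 'a"
  assumes d: "\<And>x. (f has_derivative (\<lambda>h. g x \<bullet> h)) (at x)"
    and L: "\<And>x y. norm (g x - g y) \<le> L * norm (x - y)"
    and cvx: "\<And>x y. f y \<ge> f x + g x \<bullet> (y - x)"
    and L0: "L \<ge> 0"
  shows "(norm (g y - g x))\<^sup>2 \<le> 2 * L * (f y - f x - g x \<bullet> (y - x))"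
proof (cases "L = 0")
  case True
  then have "norm (g y - g x) = 0" using L[of y x] by (simp add: norm_le_zero_iff)
  then show ?thesis using True by simp
next
  case False
  with L0 have Lp: "L > 0" by simp
  define dd where "dd = g y - g x"
  define z where "z = y - (1 / L) *\<^sub>R dd"
  have c1: "f z \<ge> f x + g x \<bullet> (z - x)" by (rule cvx)
  have c2: "f z \<le> f y + g y \<bullet> (z - y) + L / 2 * (norm (z - y))\<^sup>2"
    by (rule descent[OF d L])
  have zy: "z - y = - ((1 / L) *\<^sub>R dd)" unfolding z_def by simp
  have e1: "g y \<bullet> (z - y) - g x \<bullet> (z - y) = - (norm dd)\<^sup>2 / L"
    unfolding zy dd_def by (simp add: inner_diff_left power2_norm_eq_inner diff_divide_distrib)
  have e2: "L / 2 * (norm (z - y))\<^sup>2 = (norm dd)\<^sup>2 / (2 * L)"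
    unfolding zy using Lp by (simp add: power2_eq_square field_simps)
  have e3: "g x \<bullet> (z - x) = g x \<bullet> (y - x) + g x \<bullet> (z - y)"
    by (simp add: inner_diff_right)
  have "f x + g x \<bullet> (y - x) \<le> f y - (norm dd)\<^sup>2 / (2 * L)"
  proof -
    have "(norm dd)\<^sup>2 / L = 2 * ((norm dd)\<^sup>2 / (2 * L))" by simp
    then show ?thesis using c1 c2 e1 e2 e3 by linarith
  qed
  then have "(norm dd)\<^sup>2 / (2 * L) \<le> f y - f x - g x \<bullet> (y - x)" by simp
  then show ?thesis using Lp unfolding dd_def by (simp add: field_simps)
qed

lemma marg_gen:
  fixes w :: "'k::finite \<Rightarrow> 'b \<Rightarrow> real" and h :: "'b \<Rightarrow> real"
  assumes fin: "\<And>k. finite (B k)" and one: "\<And>k. k \<noteq> j \<Longrightarrow> (\<Sum>b\<in>B k. w k b) = 1"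
  shows "(\<Sum>f\<in>PiE UNIV B. (\<Prod>k\<in>UNIV. w k (f k)) * h (f j)) = (\<Sum>b\<in>B j. w j b * h b)"
proof -
  define w' where "w' k b = w k b * (if k = j then h b else 1)" for k b
  have "(\<Sum>f\<in>PiE UNIV B. (\<Prod>k\<in>UNIV. w k (f k)) * h (f j)) = (\<Sum>f\<in>PiE UNIV B. \<Prod>k\<in>UNIV. w' k (f k))"
  proof (rule sum.cong[OF refl])
    fix f
    have "(\<Prod>k\<in>UNIV. w' k (f k)) = (\<Prod>k\<in>UNIV. w k (f k)) * (\<Prod>k\<in>UNIV. if k = j then h (f k) else 1)"
      unfolding w'_def by (rule prod.distrib)
    also have "(\<Prod>k\<in>UNIV. if k = j then h (f k) else 1) = h (f j)"
      by (simp add: prod.delta)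
    finally show "(\<Prod>k\<in>UNIV. w k (f k)) * h (f j) = (\<Prod>k\<in>UNIV. w' k (f k))" by simp
  qed
  also have "\<dots> = (\<Prod>k\<in>UNIV. \<Sum>b\<in>B k. w' k b)"
    by (rule prod_sum_PiE[symmetric]) (auto simp: fin)
  also have "\<dots> = (\<Prod>k\<in>UNIV. if k = j then (\<Sum>b\<in>B j. w j b * h b) else 1)"
    by (rule prod.cong[OF refl]) (auto simp: w'_def one)
  also have "\<dots> = (\<Sum>b\<in>B j. w j b * h b)"
    by (simp add: prod.delta)
  finally show ?thesis .
qed

lemma expect_marg:
  fixes N :: "'n::finite \<Rightarrow> nat" and p :: "'k::finite \<Rightarrow> real"
  assumes N: "\<And>i. N i \<ge> 1"
  shows "expect N p0 p (\<lambda>\<xi>0 \<xi> l. H \<xi>0 (\<xi> j) (l i)) =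
    (\<Sum>b0\<in>UNIV. (if b0 then p0 else 1 - p0) * (\<Sum>b\<in>UNIV. (if b then p j else 1 - p j) *
        ((\<Sum>m = 1..N i. H b0 b m) / real (N i))))"
proof -
  have L1: "(\<Sum>l\<in>PiE UNIV (\<lambda>i. {1..N i}). (\<Prod>k\<in>UNIV. 1 / real (N k)) * h (l i))
      = (\<Sum>m = 1..N i. h m) / real (N i)" for h :: "nat \<Rightarrow> real"
  proof -
    have "(\<Sum>l\<in>PiE UNIV (\<lambda>i. {1..N i}). (\<Prod>k\<in>UNIV. 1 / real (N k)) * h (l i))
        = (\<Sum>m = 1..N i. 1 / real (N i) * h m)"
      by (rule marg_gen[where w = "\<lambda>k b. 1 / real (N k)"]) (use N in \<open>auto simp: Suc_le_eq\<close>)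
    also have "\<dots> = (\<Sum>m = 1..N i. h m) / real (N i)" by (simp add: sum_divide_distrib)
    finally show ?thesis .
  qed
  have L2: "(\<Sum>\<xi>\<in>(UNIV::('k \<Rightarrow> bool) set). (\<Prod>k\<in>UNIV. if \<xi> k then p k else 1 - p k) * h (\<xi> j))
      = (\<Sum>b\<in>UNIV. (if b then p j else 1 - p j) * h b)" for h :: "bool \<Rightarrow> real"
  proof -
    have "(\<Sum>\<xi>\<in>(UNIV::('k \<Rightarrow> bool) set). (\<Prod>k\<in>UNIV. if \<xi> k then p k else 1 - p k) * h (\<xi> j))
      = (\<Sum>\<xi>\<in>PiE UNIV (\<lambda>_. UNIV). (\<Prod>k\<in>UNIV. (\<lambda>k b. if b then p k else 1 - p k) k (\<xi> k)) * h (\<xi> j))"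
      by simp
    also have "\<dots> = (\<Sum>b\<in>UNIV. (if b then p j else 1 - p j) * h b)"
      by (rule marg_gen) (auto simp: UNIV_bool)
    finally show ?thesis .
  qed
  have "expect N p0 p (\<lambda>\<xi>0 \<xi> l. H \<xi>0 (\<xi> j) (l i)) =
     (\<Sum>\<xi>0\<in>UNIV. \<Sum>\<xi>\<in>(UNIV::('k \<Rightarrow> bool) set).
        (if \<xi>0 then p0 else 1 - p0) * (\<Prod>k\<in>UNIV. if \<xi> k then p k else 1 - p k) *
        (\<Sum>l\<in>PiE UNIV (\<lambda>i. {1..N i}). (\<Prod>k\<in>UNIV. 1 / real (N k)) * H \<xi>0 (\<xi> j) (l i)))"
    unfolding expect_def by (simp add: sum_distrib_left mult.assoc)
  also have "\<dots> = (\<Sum>\<xi>0\<in>UNIV. (if \<xi>0 then p0 else 1 - p0) * (\<Sum>\<xi>\<in>(UNIV::('k \<Rightarrow> bool) set).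
        (\<Prod>k\<in>UNIV. if \<xi> k then p k else 1 - p k) *
        ((\<Sum>m = 1..N i. H \<xi>0 (\<xi> j) m) / real (N i))))"
    by (simp only: L1 sum_distrib_left mult.assoc)
  also have "\<dots> = (\<Sum>b0\<in>UNIV. (if b0 then p0 else 1 - p0) * (\<Sum>b\<in>UNIV. (if b then p j else 1 - p j) *
        ((\<Sum>m = 1..N i. H b0 b m) / real (N i))))"
    by (simp only: L2[where h = "\<lambda>b. (\<Sum>m = 1..N i. H _ b m) / real (N i)"])
  finally show ?thesis .
qed

lemma wavg_zero:
  fixes c :: "'i \<Rightarrow> real" and X :: "'i \<Rightarrow> 'a::real_vector"
  assumes fin: "finite S" and nn: "\<And>i. i \<in> S \<Longrightarrow> c i \<ge> 0"
  shows "(\<Sum>i\<in>S. c i *\<^sub>R (X i - (\<Sum>i\<in>S. c i *\<^sub>R X i) /\<^sub>R (\<Sum>i\<in>S. c i))) = 0"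
proof -
  have e: "(\<Sum>i\<in>S. c i *\<^sub>R (X i - A)) = (\<Sum>i\<in>S. c i *\<^sub>R X i) - (\<Sum>i\<in>S. c i) *\<^sub>R A" for A
    by (simp add: scaleR_diff_right sum_subtractf scaleR_sum_left)
  show ?thesis
  proof (cases "(\<Sum>i\<in>S. c i) = 0")
    case True
    then have "\<forall>i\<in>S. c i = 0" using sum_nonneg_eq_0_iff[of S c] fin nn by blast
    then show ?thesis by simp
  next
    case False
    then show ?thesis by (simp add: e)
  qed
qed

lemma clavg_zero:
  fixes cl :: "'n::finite \<Rightarrow> 'k::finite" and X :: "('a::real_inner)^'n"
  assumes gp: "\<And>i. \<gamma> i > 0"
  shows "(\<Sum>i\<in>UNIV. (c (cl i) * \<gamma> i) * ((X $ i - clavg cl \<gamma> X (cl i)) \<bullet> w (cl i))) = 0"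
proof -
  have "(\<Sum>i\<in>UNIV. (c (cl i) * \<gamma> i) * ((X $ i - clavg cl \<gamma> X (cl i)) \<bullet> w (cl i)))
      = (\<Sum>j\<in>UNIV. \<Sum>i\<in>{i. cl i = j}. (c (cl i) * \<gamma> i) * ((X $ i - clavg cl \<gamma> X (cl i)) \<bullet> w (cl i)))"
    using sum.group[of UNIV UNIV cl "\<lambda>i. (c (cl i) * \<gamma> i) * ((X $ i - clavg cl \<gamma> X (cl i)) \<bullet> w (cl i))"] by simp
  also have "\<dots> = (\<Sum>j\<in>(UNIV::'k set). 0::real)"
  proof (rule sum.cong[OF refl])
    fix j
    have "(\<Sum>i\<in>{i. cl i = j}. (c (cl i) * \<gamma> i) * ((X $ i - clavg cl \<gamma> X (cl i)) \<bullet> w (cl i)))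
        = (\<Sum>i\<in>{i. cl i = j}. c j * (\<gamma> i * ((X $ i - clavg cl \<gamma> X j) \<bullet> w j)))"
      by (rule sum.cong) auto
    also have "\<dots> = c j * ((\<Sum>i\<in>{i. cl i = j}. \<gamma> i *\<^sub>R (X $ i - clavg cl \<gamma> X j)) \<bullet> w j)"
      by (simp add: sum_distrib_left inner_sum_left)
    also have "(\<Sum>i\<in>{i. cl i = j}. \<gamma> i *\<^sub>R (X $ i - clavg cl \<gamma> X j)) = 0"
      unfolding clavg_def by (rule wavg_zero) (auto simp: less_imp_le[OF gp])
    finally show "(\<Sum>i\<in>{i. cl i = j}. (c (cl i) * \<gamma> i) * ((X $ i - clavg cl \<gamma> X (cl i)) \<bullet> w (cl i))) = 0"
      by simp
  qed
  finally show ?thesis by simp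
qed

lemma gavg_zero:
  fixes cl :: "'n::finite \<Rightarrow> 'k::finite" and X :: "('a::real_inner)^'n"
  assumes gp: "\<And>i. \<gamma> i > 0" and ap: "\<And>j. \<alpha> j \<ge> 0"
  shows "(\<Sum>i\<in>UNIV. (\<alpha> (cl i) * \<gamma> i) * ((X $ i - gavg cl \<alpha> \<gamma> X) \<bullet> w)) = 0"
proof -
  have "(\<Sum>i\<in>UNIV. (\<alpha> (cl i) * \<gamma> i) * ((X $ i - gavg cl \<alpha> \<gamma> X) \<bullet> w))
      = (\<Sum>i\<in>UNIV. (\<alpha> (cl i) * \<gamma> i) *\<^sub>R (X $ i - gavg cl \<alpha> \<gamma> X)) \<bullet> w"
    by (simp add: inner_sum_left)
  also have "(\<Sum>i\<in>UNIV. (\<alpha> (cl i) * \<gamma> i) *\<^sub>R (X $ i - gavg cl \<alpha> \<gamma> X)) = 0"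
    unfolding gavg_def by (rule wavg_zero) (auto intro: mult_nonneg_nonneg ap less_imp_le[OF gp])
  finally show ?thesis by simp
qed

lemma clavg_linear: "linear (\<lambda>\<Theta>::('a::real_vector)^'n::finite. clavg cl \<gamma> \<Theta> j)"
  by (rule linearI) (simp_all add: clavg_def scaleR_add_right sum.distrib scaleR_sum_right mult_ac)

lemma gavg_linear: "linear (\<lambda>\<Theta>::('a::real_vector)^'n::finite. gavg cl \<alpha> \<gamma> \<Theta>)"
  by (rule linearI) (simp_all add: gavg_def scaleR_add_right sum.distrib scaleR_sum_right mult_ac)

lemma lin_cl_deriv: "((\<lambda>\<Theta>::('a::euclidean_space)^'n::finite. \<Theta> $ i - clavg cl \<gamma> \<Theta> j) has_derivative (\<lambda>H. H $ i - clavg cl \<gamma> H j)) F"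
proof -
  have "linear (\<lambda>\<Theta>::'a^'n. \<Theta> $ i - clavg cl \<gamma> \<Theta> j)"
    using clavg_linear[of cl \<gamma> j] bounded_linear_vec_nth[of i]
    by (intro linear_compose_sub) (auto dest: bounded_linear.linear)
  then show ?thesis by (intro bounded_linear_imp_has_derivative) (simp add: linear_conv_bounded_linear)
qed

lemma lin_g_deriv: "((\<lambda>\<Theta>::('a::euclidean_space)^'n::finite. \<Theta> $ i - gavg cl \<alpha> \<gamma> \<Theta>) has_derivative (\<lambda>H. H $ i - gavg cl \<alpha> \<gamma> H)) F"
proof -
  have "linear (\<lambda>\<Theta>::'a^'n. \<Theta> $ i - gavg cl \<alpha> \<gamma> \<Theta>)"
    using gavg_linear[of cl \<alpha> \<gamma>] bounded_linear_vec_nth[of i]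
    by (intro linear_compose_sub) (auto dest: bounded_linear.linear)
  then show ?thesis by (intro bounded_linear_imp_has_derivative) (simp add: linear_conv_bounded_linear)
qed

lemma lf_deriv:
  fixes ft :: "'n::finite \<Rightarrow> nat \<Rightarrow> 'a::euclidean_space \<Rightarrow> real"
  assumes grad: "\<And>i l x. l \<in> {1..N i} \<Longrightarrow> (ft i l has_derivative (\<lambda>h. gt i l x \<bullet> h)) (at x)"
  shows "((\<lambda>\<Theta>::'a^'n. loc_f N ft i (\<Theta> $ i)) has_derivative (\<lambda>H. loc_grad N gt i (X $ i) \<bullet> H $ i)) (at X)"
proof -
  have "(loc_f N ft i has_derivative (\<lambda>h. loc_grad N gt i x \<bullet> h)) (at x)" for x
  proof -
    have "((\<lambda>x. \<Sum>l = 1..N i. ft i l x) has_derivative (\<lambda>h. \<Sum>l = 1..N i. gt i l x \<bullet> h)) (at x)"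
      by (rule has_derivative_sum) (rule grad)
    then have "((\<lambda>x. (\<Sum>l = 1..N i. ft i l x) * inverse (real (N i))) has_derivative (\<lambda>h. (\<Sum>l = 1..N i. gt i l x \<bullet> h) * inverse (real (N i)))) (at x)"
      by (rule has_derivative_mult_left)
    then show ?thesis
      unfolding loc_f_def[abs_def] loc_grad_def by (simp add: inner_sum_left divide_inverse mult.commute)
  qed
  from has_derivative_compose[OF bounded_linear_imp_has_derivative[OF bounded_linear_vec_nth[of i]] this]
  show ?thesis .
qed

definition Gvec :: "('n::finite \<Rightarrow> nat) \<Rightarrow> ('n \<Rightarrow> nat \<Rightarrow> 'a \<Rightarrow> 'a) \<Rightarrow> ('n \<Rightarrow> 'k)
    \<Rightarrow> ('k \<Rightarrow> real) \<Rightarrow> ('n \<Rightarrow> real) \<Rightarrow> ('a::real_vector)^'n \<Rightarrow> 'a^'n" where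
  "Gvec N gt cl \<alpha> \<gamma> X = (\<chi> i. loc_grad N gt i (X $ i)
      + (\<alpha> (cl i) * \<gamma> i) *\<^sub>R (X $ i - gavg cl \<alpha> \<gamma> X)
      + ((1 - \<alpha> (cl i)) * \<gamma> i) *\<^sub>R (X $ i - clavg cl \<gamma> X (cl i)))"

lemma Fobj_deriv:
  fixes cl :: "'n::finite \<Rightarrow> 'k::finite" and ft :: "'n \<Rightarrow> nat \<Rightarrow> 'a::euclidean_space \<Rightarrow> real"
    and X :: "'a^'n"
  assumes grad: "\<And>i l x. l \<in> {1..N i} \<Longrightarrow> (ft i l has_derivative (\<lambda>h. gt i l x \<bullet> h)) (at x)"
    and gp: "\<And>i. \<gamma> i > 0" and ap: "\<And>j. \<alpha> j \<ge> 0"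
  shows "(Fobj N ft cl \<alpha> \<gamma> has_derivative (\<lambda>H. Gvec N gt cl \<alpha> \<gamma> X \<bullet> H)) (at X)"
proof -
  let ?v = "\<lambda>i. X $ i - clavg cl \<gamma> X (cl i)"
  let ?u = "\<lambda>i. X $ i - gavg cl \<alpha> \<gamma> X"
  let ?D = "\<lambda>H. \<Sum>i\<in>UNIV. loc_grad N gt i (X $ i) \<bullet> H $ i
      + (1 - \<alpha> (cl i)) * \<gamma> i / 2 * (?v i \<bullet> (H $ i - clavg cl \<gamma> H (cl i)) + (H $ i - clavg cl \<gamma> H (cl i)) \<bullet> ?v i)
      + \<alpha> (cl i) * \<gamma> i / 2 * (?u i \<bullet> (H $ i - gavg cl \<alpha> \<gamma> H) + (H $ i - gavg cl \<alpha> \<gamma> H) \<bullet> ?u i)"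
  have d: "(Fobj N ft cl \<alpha> \<gamma> has_derivative ?D) (at X)"
    unfolding Fobj_def[abs_def] power2_norm_eq_inner
    by (intro has_derivative_sum has_derivative_add has_derivative_mult_right has_derivative_inner
        lf_deriv[OF grad] lin_cl_deriv lin_g_deriv)
  have "?D H = Gvec N gt cl \<alpha> \<gamma> X \<bullet> H" for H
  proof -
    have "?D H = (\<Sum>i\<in>UNIV. loc_grad N gt i (X $ i) \<bullet> H $ i + (1 - \<alpha> (cl i)) * \<gamma> i * (?v i \<bullet> H $ i)
        + \<alpha> (cl i) * \<gamma> i * (?u i \<bullet> H $ i))
       - (\<Sum>i\<in>UNIV. ((1 - \<alpha> (cl i)) * \<gamma> i) * (?v i \<bullet> clavg cl \<gamma> H (cl i)))
       - (\<Sum>i\<in>UNIV. (\<alpha> (cl i) * \<gamma> i) * (?u i \<bullet> gavg cl \<alpha> \<gamma> H))"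
    proof -
      have "?D H = (\<Sum>i\<in>UNIV. (loc_grad N gt i (X $ i) \<bullet> H $ i + (1 - \<alpha> (cl i)) * \<gamma> i * (?v i \<bullet> H $ i)
        + \<alpha> (cl i) * \<gamma> i * (?u i \<bullet> H $ i))
       - ((1 - \<alpha> (cl i)) * \<gamma> i) * (?v i \<bullet> clavg cl \<gamma> H (cl i))
       - (\<alpha> (cl i) * \<gamma> i) * (?u i \<bullet> gavg cl \<alpha> \<gamma> H))"
      proof (rule sum.cong[OF refl])
        fix i
        have c1: "(H $ i - clavg cl \<gamma> H (cl i)) \<bullet> ?v i = ?v i \<bullet> (H $ i - clavg cl \<gamma> H (cl i))"
          by (rule inner_commute)
        have c2: "(H $ i - gavg cl \<alpha> \<gamma> H) \<bullet> ?u i = ?u i \<bullet> (H $ i - gavg cl \<alpha> \<gamma> H)"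
          by (rule inner_commute)
        show "loc_grad N gt i (X $ i) \<bullet> H $ i
      + (1 - \<alpha> (cl i)) * \<gamma> i / 2 * (?v i \<bullet> (H $ i - clavg cl \<gamma> H (cl i)) + (H $ i - clavg cl \<gamma> H (cl i)) \<bullet> ?v i)
      + \<alpha> (cl i) * \<gamma> i / 2 * (?u i \<bullet> (H $ i - gavg cl \<alpha> \<gamma> H) + (H $ i - gavg cl \<alpha> \<gamma> H) \<bullet> ?u i) =
          (loc_grad N gt i (X $ i) \<bullet> H $ i + (1 - \<alpha> (cl i)) * \<gamma> i * (?v i \<bullet> H $ i)
        + \<alpha> (cl i) * \<gamma> i * (?u i \<bullet> H $ i))
       - ((1 - \<alpha> (cl i)) * \<gamma> i) * (?v i \<bullet> clavg cl \<gamma> H (cl i))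
       - (\<alpha> (cl i) * \<gamma> i) * (?u i \<bullet> gavg cl \<alpha> \<gamma> H)"
        proof -
          have gen: "\<And>L A B C D k1 k2 :: real. L + k1 / 2 * ((A - B) + (A - B)) + k2 / 2 * ((C - D) + (C - D))
             = (L + k1 * A + k2 * C) - k1 * B - k2 * D" by (simp add: algebra_simps)
          show ?thesis unfolding c1 c2 inner_diff_right[of "?v i"] inner_diff_right[of "?u i"] by (rule gen)
        qed
      qed
      then show ?thesis by (simp only: sum_subtractf)
    qed
    also have "(\<Sum>i\<in>UNIV. ((1 - \<alpha> (cl i)) * \<gamma> i) * (?v i \<bullet> clavg cl \<gamma> H (cl i))) = 0"
      by (rule clavg_zero[OF gp])
    also have "(\<Sum>i\<in>UNIV. (\<alpha> (cl i) * \<gamma> i) * (?u i \<bullet> gavg cl \<alpha> \<gamma> H)) = 0"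
      by (rule gavg_zero[OF gp ap])
    finally show ?thesis
      by (simp add: Gvec_def inner_vec_def inner_add_left algebra_simps)
  qed
  then have "?D = (\<lambda>H. Gvec N gt cl \<alpha> \<gamma> X \<bullet> H)" by (rule ext)
  with d show ?thesis by simp
qed

lemma quad_id: fixes u v :: "'a::real_inner"
  shows "(norm u)\<^sup>2 - (norm v)\<^sup>2 = (norm (u - v))\<^sup>2 + 2 * (v \<bullet> (u - v))"
  by (simp add: power2_norm_eq_inner inner_diff_left inner_diff_right inner_commute[of u v] algebra_simps)

lemma breg_id:
  fixes cl :: "'n::finite \<Rightarrow> 'k::finite" and ft :: "'n \<Rightarrow> nat \<Rightarrow> 'a::euclidean_space \<Rightarrow> real"
    and X \<Theta> :: "'a^'n"
  assumes gp: "\<And>i. \<gamma> i > 0" and ap: "\<And>j. \<alpha> j \<ge> 0"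
  shows "Fobj N ft cl \<alpha> \<gamma> \<Theta> - Fobj N ft cl \<alpha> \<gamma> X - Gvec N gt cl \<alpha> \<gamma> X \<bullet> (\<Theta> - X)
    = (\<Sum>i\<in>UNIV. (loc_f N ft i (\<Theta> $ i) - loc_f N ft i (X $ i) - loc_grad N gt i (X $ i) \<bullet> (\<Theta> $ i - X $ i))
       + (1 - \<alpha> (cl i)) * \<gamma> i / 2 * (norm ((\<Theta> $ i - clavg cl \<gamma> \<Theta> (cl i)) - (X $ i - clavg cl \<gamma> X (cl i))))\<^sup>2
       + \<alpha> (cl i) * \<gamma> i / 2 * (norm ((\<Theta> $ i - gavg cl \<alpha> \<gamma> \<Theta>) - (X $ i - gavg cl \<alpha> \<gamma> X)))\<^sup>2)"
proof -
  let ?v = "\<lambda>i. X $ i - clavg cl \<gamma> X (cl i)"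
  let ?u = "\<lambda>i. X $ i - gavg cl \<alpha> \<gamma> X"
  let ?dC = "\<lambda>j. clavg cl \<gamma> \<Theta> j - clavg cl \<gamma> X j"
  let ?dG = "gavg cl \<alpha> \<gamma> \<Theta> - gavg cl \<alpha> \<gamma> X"
  let ?T = "\<lambda>i. (loc_f N ft i (\<Theta> $ i) - loc_f N ft i (X $ i) - loc_grad N gt i (X $ i) \<bullet> (\<Theta> $ i - X $ i))
       + (1 - \<alpha> (cl i)) * \<gamma> i / 2 * (norm ((\<Theta> $ i - clavg cl \<gamma> \<Theta> (cl i)) - (X $ i - clavg cl \<gamma> X (cl i))))\<^sup>2
       + \<alpha> (cl i) * \<gamma> i / 2 * (norm ((\<Theta> $ i - gavg cl \<alpha> \<gamma> \<Theta>) - (X $ i - gavg cl \<alpha> \<gamma> X)))\<^sup>2"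
  have "Fobj N ft cl \<alpha> \<gamma> \<Theta> - Fobj N ft cl \<alpha> \<gamma> X - Gvec N gt cl \<alpha> \<gamma> X \<bullet> (\<Theta> - X)
      = (\<Sum>i\<in>UNIV. ?T i - ((1 - \<alpha> (cl i)) * \<gamma> i) * (?v i \<bullet> ?dC (cl i))
          - (\<alpha> (cl i) * \<gamma> i) * (?u i \<bullet> ?dG))"
  proof -
    have "Fobj N ft cl \<alpha> \<gamma> \<Theta> - Fobj N ft cl \<alpha> \<gamma> X - Gvec N gt cl \<alpha> \<gamma> X \<bullet> (\<Theta> - X)
      = (\<Sum>i\<in>UNIV. (loc_f N ft i (\<Theta> $ i)
      + (1 - \<alpha> (cl i)) * \<gamma> i / 2 * (norm (\<Theta> $ i - clavg cl \<gamma> \<Theta> (cl i)))\<^sup>2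
      + \<alpha> (cl i) * \<gamma> i / 2 * (norm (\<Theta> $ i - gavg cl \<alpha> \<gamma> \<Theta>))\<^sup>2)
      - (loc_f N ft i (X $ i)
      + (1 - \<alpha> (cl i)) * \<gamma> i / 2 * (norm (X $ i - clavg cl \<gamma> X (cl i)))\<^sup>2
      + \<alpha> (cl i) * \<gamma> i / 2 * (norm (X $ i - gavg cl \<alpha> \<gamma> X))\<^sup>2)
      - Gvec N gt cl \<alpha> \<gamma> X $ i \<bullet> (\<Theta> $ i - X $ i))"
      unfolding Fobj_def inner_vec_def by (simp add: sum_subtractf)
    also have "\<dots> = (\<Sum>i\<in>UNIV. ?T i - ((1 - \<alpha> (cl i)) * \<gamma> i) * (?v i \<bullet> ?dC (cl i))
          - (\<alpha> (cl i) * \<gamma> i) * (?u i \<bullet> ?dG))"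
    proof (rule sum.cong[OF refl])
      fix i
      define B where "B = (\<Theta> $ i - clavg cl \<gamma> \<Theta> (cl i)) - (X $ i - clavg cl \<gamma> X (cl i))"
      define A where "A = (\<Theta> $ i - gavg cl \<alpha> \<gamma> \<Theta>) - (X $ i - gavg cl \<alpha> \<gamma> X)"
      have q1: "(norm (\<Theta> $ i - clavg cl \<gamma> \<Theta> (cl i)))\<^sup>2 = (norm (?v i))\<^sup>2 + ((norm B)\<^sup>2 + 2 * (?v i \<bullet> B))"
        using quad_id[of "\<Theta> $ i - clavg cl \<gamma> \<Theta> (cl i)" "?v i"] unfolding B_def by simp
      have q2: "(norm (\<Theta> $ i - gavg cl \<alpha> \<gamma> \<Theta>))\<^sup>2 = (norm (?u i))\<^sup>2 + ((norm A)\<^sup>2 + 2 * (?u i \<bullet> A))"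
        using quad_id[of "\<Theta> $ i - gavg cl \<alpha> \<gamma> \<Theta>" "?u i"] unfolding A_def by simp
      have e1: "\<Theta> $ i - X $ i = B + ?dC (cl i)" unfolding B_def by simp
      have e2: "\<Theta> $ i - X $ i = A + ?dG" unfolding A_def by simp
      have g: "Gvec N gt cl \<alpha> \<gamma> X $ i \<bullet> (\<Theta> $ i - X $ i) = loc_grad N gt i (X $ i) \<bullet> (\<Theta> $ i - X $ i)
          + (\<alpha> (cl i) * \<gamma> i) * (?u i \<bullet> A + ?u i \<bullet> ?dG)
          + ((1 - \<alpha> (cl i)) * \<gamma> i) * (?v i \<bullet> B + ?v i \<bullet> ?dC (cl i))"
      proof -
        have "Gvec N gt cl \<alpha> \<gamma> X $ i \<bullet> (\<Theta> $ i - X $ i) = loc_grad N gt i (X $ i) \<bullet> (\<Theta> $ i - X $ i)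
          + (\<alpha> (cl i) * \<gamma> i) * (?u i \<bullet> (\<Theta> $ i - X $ i))
          + ((1 - \<alpha> (cl i)) * \<gamma> i) * (?v i \<bullet> (\<Theta> $ i - X $ i))"
          by (simp add: Gvec_def inner_add_left)
        also have "\<dots> = loc_grad N gt i (X $ i) \<bullet> (\<Theta> $ i - X $ i)
          + (\<alpha> (cl i) * \<gamma> i) * (?u i \<bullet> (A + ?dG))
          + ((1 - \<alpha> (cl i)) * \<gamma> i) * (?v i \<bullet> (B + ?dC (cl i)))"
          using e1 e2 by metis
        finally show ?thesis by (simp only: inner_add_right)
      qed
      have gen: "\<And>(F1::real) F2 k1 k2 nv nB vB vdC nu nA uA udG L.
         (F1 + k1 / 2 * (nv + (nB + 2 * vB)) + k2 / 2 * (nu + (nA + 2 * uA)))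
         - (F2 + k1 / 2 * nv + k2 / 2 * nu) - (L + k2 * (uA + udG) + k1 * (vB + vdC))
         = ((F1 - F2 - L) + k1 / 2 * nB + k2 / 2 * nA) - k1 * vdC - k2 * udG"
        by (simp add: algebra_simps)
      show "(loc_f N ft i (\<Theta> $ i)
      + (1 - \<alpha> (cl i)) * \<gamma> i / 2 * (norm (\<Theta> $ i - clavg cl \<gamma> \<Theta> (cl i)))\<^sup>2
      + \<alpha> (cl i) * \<gamma> i / 2 * (norm (\<Theta> $ i - gavg cl \<alpha> \<gamma> \<Theta>))\<^sup>2)
      - (loc_f N ft i (X $ i)
      + (1 - \<alpha> (cl i)) * \<gamma> i / 2 * (norm (X $ i - clavg cl \<gamma> X (cl i)))\<^sup>2
      + \<alpha> (cl i) * \<gamma> i / 2 * (norm (X $ i - gavg cl \<alpha> \<gamma> X))\<^sup>2)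
      - Gvec N gt cl \<alpha> \<gamma> X $ i \<bullet> (\<Theta> $ i - X $ i) = ?T i - ((1 - \<alpha> (cl i)) * \<gamma> i) * (?v i \<bullet> ?dC (cl i))
          - (\<alpha> (cl i) * \<gamma> i) * (?u i \<bullet> ?dG)"
        unfolding q1 q2 g B_def[symmetric] A_def[symmetric] by (rule gen)
    qed
    finally show ?thesis .
  qed
  also have "\<dots> = (\<Sum>i\<in>UNIV. ?T i) - (\<Sum>i\<in>UNIV. ((1 - \<alpha> (cl i)) * \<gamma> i) * (?v i \<bullet> ?dC (cl i)))
          - (\<Sum>i\<in>UNIV. (\<alpha> (cl i) * \<gamma> i) * (?u i \<bullet> ?dG))"
    by (simp only: sum_subtractf)
  also have "(\<Sum>i\<in>UNIV. ((1 - \<alpha> (cl i)) * \<gamma> i) * (?v i \<bullet> ?dC (cl i))) = 0"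
    by (rule clavg_zero[OF gp])
  also have "(\<Sum>i\<in>UNIV. (\<alpha> (cl i) * \<gamma> i) * (?u i \<bullet> ?dG)) = 0"
    by (rule gavg_zero[OF gp ap])
  finally show ?thesis by simp
qed

lemma expect_sum:
  "expect N p0 p (\<lambda>\<xi>0 \<xi> l. \<Sum>i\<in>(UNIV::'n::finite set). Z i \<xi>0 \<xi> l)
   = (\<Sum>i\<in>UNIV. expect N p0 (p::'k::finite \<Rightarrow> real) (Z i))"
  unfolding expect_def by (simp add: sum_distrib_left sum.swap[of _ "UNIV::'n set"])

lemma norm_vec_sq: "(norm (v::('a::real_normed_vector)^'n::finite))\<^sup>2 = (\<Sum>i\<in>UNIV. (norm (v $ i))\<^sup>2)"
  unfolding norm_vec_def L2_set_def by (simp add: sum_nonneg)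

theorem mainTheorem10:
  fixes cl :: "'n::finite \<Rightarrow> 'k::finite"
    and N :: "'n \<Rightarrow> nat"
    and ft :: "'n \<Rightarrow> nat \<Rightarrow> 'a::euclidean_space \<Rightarrow> real"
    and gt :: "'n \<Rightarrow> nat \<Rightarrow> 'a \<Rightarrow> 'a"
    and Lt \<mu> p0 :: real
    and \<alpha> p :: "'k \<Rightarrow> real"
    and \<gamma> :: "'n \<Rightarrow> real"
    and \<Theta> X gradF :: "'a^'n"
  assumes clusters_nonempty: "surj cl"
    and N_pos: "\<And>i. N i \<ge> 1"
    and grad: "\<And>i l x. l \<in> {1..N i} \<Longrightarrow> (ft i l has_derivative (\<lambda>h. gt i l x \<bullet> h)) (at x)"
    and smooth: "\<And>i l x y. l \<in> {1..N i} \<Longrightarrow> norm (gt i l x - gt i l y) \<le> Lt * norm (x - y)"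
    and mu_pos: "\<mu> > 0"
    and strongly_convex: "\<And>i l x y. l \<in> {1..N i} \<Longrightarrow>
          ft i l y \<ge> ft i l x + gt i l x \<bullet> (y - x) + \<mu> / 2 * (norm (y - x))\<^sup>2"
    and gamma_pos: "\<And>i. \<gamma> i > 0"
    and alpha_range: "\<And>j. 0 \<le> \<alpha> j \<and> \<alpha> j \<le> 1"
    and alpha_nonzero: "\<exists>j. \<alpha> j \<noteq> 0"
    and p0_range: "0 < p0" "p0 < 1"
    and p_range: "\<And>j. 0 < p j \<and> p j < 1"
    and gradF: "(Fobj N ft cl \<alpha> \<gamma> has_derivative (\<lambda>H. gradF \<bullet> H)) (at X)"
  shows "expect N p0 p (\<lambda>\<xi>0 \<xi> l. (norm (gest N gt cl \<alpha> \<gamma> p0 p \<Theta> X \<xi>0 \<xi> l - gradF))\<^sup>2)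
         \<le> 2 * Lconst cl \<alpha> \<gamma> p0 p Lt *
           (Fobj N ft cl \<alpha> \<gamma> \<Theta> - Fobj N ft cl \<alpha> \<gamma> X - gradF \<bullet> (\<Theta> - X))"
proof -
  have ap: "\<And>j. \<alpha> j \<ge> 0" and a1: "\<And>j. \<alpha> j \<le> 1" using alpha_range by auto
  define G where "G = Gvec N gt cl \<alpha> \<gamma> X"
  have gG: "gradF = G"
  proof -
    have "(\<lambda>H. gradF \<bullet> H) = (\<lambda>H. G \<bullet> H)"
      using has_derivative_unique[OF gradF Fobj_deriv[OF grad gamma_pos ap]] unfolding G_def .
    then have "gradF \<bullet> (gradF - G) = G \<bullet> (gradF - G)" by metis
    then have "(gradF - G) \<bullet> (gradF - G) = 0" by (simp add: inner_diff_left)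
    then show ?thesis by simp
  qed
  have Lt0: "Lt \<ge> 0"
  proof -
    obtain b :: 'a where b: "b \<in> Basis" using nonempty_Basis by blast
    then have nb: "norm (0 - b) > 0" by (auto simp: nonzero_Basis)
    obtain i :: 'n where True by simp
    have "0 \<le> Lt * norm (0 - b)"
      using smooth[of 1 i 0 b] N_pos[of i] by (meson atLeastAtMost_iff le_refl norm_ge_zero order_trans)
    with nb show ?thesis by (simp add: zero_le_mult_iff)
  qed
  define L where "L = Lconst cl \<alpha> \<gamma> p0 p Lt"
  define A where "A i = (\<Theta> $ i - gavg cl \<alpha> \<gamma> \<Theta>) - (X $ i - gavg cl \<alpha> \<gamma> X)" for i
  define B where "B i = (\<Theta> $ i - clavg cl \<gamma> \<Theta> (cl i)) - (X $ i - clavg cl \<gamma> X (cl i))" for i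
  define Dm where "Dm i m = gt i m (\<Theta> $ i) - gt i m (X $ i)" for i m
  define c1 where "c1 i = \<gamma> i * \<alpha> (cl i) / p0" for i
  define c2 where "c2 i = \<gamma> i * (1 - tau p0 p (cl i)) * (1 - \<alpha> (cl i)) / ((1 - p0) * p (cl i))" for i
  define c3 where "c3 i = 1 / ((1 - p0) * (1 - p (cl i)))" for i
  define Q where "Q i b0 b m = (if b0 then (c1 i)\<^sup>2 * (norm (A i))\<^sup>2 else if b then (c2 i)\<^sup>2 * (norm (B i))\<^sup>2
      else (c3 i)\<^sup>2 * (norm (Dm i m))\<^sup>2)" for i b0 b m
  define T where "T i = (loc_f N ft i (\<Theta> $ i) - loc_f N ft i (X $ i) - loc_grad N gt i (X $ i) \<bullet> (\<Theta> $ i - X $ i))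
       + (1 - \<alpha> (cl i)) * \<gamma> i / 2 * (norm (B i))\<^sup>2 + \<alpha> (cl i) * \<gamma> i / 2 * (norm (A i))\<^sup>2" for i
  have nq: "(norm (gest N gt cl \<alpha> \<gamma> p0 p \<Theta> X \<xi>0 \<xi> l - G))\<^sup>2 = (\<Sum>i\<in>UNIV. Q i \<xi>0 (\<xi> (cl i)) (l i))" for \<xi>0 \<xi> l
    unfolding norm_vec_sq
  proof (rule sum.cong[OF refl])
    fix i
    show "(norm ((gest N gt cl \<alpha> \<gamma> p0 p \<Theta> X \<xi>0 \<xi> l - G) $ i))\<^sup>2 = Q i \<xi>0 (\<xi> (cl i)) (l i)"
      by (cases \<xi>0; cases "\<xi> (cl i)")
        (simp_all add: gest_def G_def Gvec_def Q_def A_def B_def Dm_def c1_def c2_def c3_def power_mult_distrib power_divide power2_abs)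
  qed
  have lhs: "expect N p0 p (\<lambda>\<xi>0 \<xi> l. (norm (gest N gt cl \<alpha> \<gamma> p0 p \<Theta> X \<xi>0 \<xi> l - gradF))\<^sup>2)
     = (\<Sum>i\<in>UNIV. expect N p0 p (\<lambda>\<xi>0 \<xi> l. Q i \<xi>0 (\<xi> (cl i)) (l i)))"
    unfolding gG nq by (rule expect_sum)
  have rhs: "Fobj N ft cl \<alpha> \<gamma> \<Theta> - Fobj N ft cl \<alpha> \<gamma> X - gradF \<bullet> (\<Theta> - X) = (\<Sum>i\<in>UNIV. T i)"
    unfolding gG G_def T_def A_def B_def by (rule breg_id[OF gamma_pos ap])
  have bound: "expect N p0 p (\<lambda>\<xi>0 \<xi> l. Q i \<xi>0 (\<xi> (cl i)) (l i)) \<le> 2 * L * T i" for i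
proof -
    define j where "j = cl i"
    define s where "s = p0 + 2 * (1 - p0) * p j"
    have p0: "0 < p0" "p0 < 1" using p0_range by auto
    have pj: "0 < p j" "p j < 1" using p_range[of j] by auto
    have sp: "s > 0" unfolding s_def using p0 pj by (simp add: add_pos_nonneg)
    have gi: "\<gamma> i > 0" using gamma_pos .
    have aj: "0 \<le> \<alpha> j" "\<alpha> j \<le> 1" using alpha_range[of j] by auto
    have Ni: "real (N i) \<ge> 1" using N_pos[of i] by simp
    define nA where "nA = (norm (A i))\<^sup>2"
    define nB where "nB = (norm (B i))\<^sup>2"
    define S where "S = (\<Sum>m = 1..N i. (norm (Dm i m))\<^sup>2)"
    define Br where "Br m = ft i m (\<Theta> $ i) - ft i m (X $ i) - gt i m (X $ i) \<bullet> (\<Theta> $ i - X $ i)" for m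
    define Df where "Df = loc_f N ft i (\<Theta> $ i) - loc_f N ft i (X $ i) - loc_grad N gt i (X $ i) \<bullet> (\<Theta> $ i - X $ i)"
    have nA0: "nA \<ge> 0" and nB0: "nB \<ge> 0" unfolding nA_def nB_def by auto
    have Lf1: "2 / p0 * (\<alpha> j * \<gamma> i) \<le> L"
    proof -
      have "\<alpha> j * \<gamma> i \<le> Max ((\<lambda>i'. \<alpha> j * \<gamma> i') ` {i'. cl i' = j})"
        by (rule Max_ge) (auto simp: j_def)
      also have "\<dots> \<le> Max (range (\<lambda>j. Max ((\<lambda>i. \<alpha> j * \<gamma> i) ` {i. cl i = j})))"
        by (rule Max_ge) auto
      finally have "2 / p0 * (\<alpha> j * \<gamma> i) \<le> 2 / p0 * Max (range (\<lambda>j. Max ((\<lambda>i. \<alpha> j * \<gamma> i) ` {i. cl i = j})))"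
        using p0 by (intro mult_left_mono) auto
      then show ?thesis unfolding L_def Lconst_def by linarith
    qed
    have Lf2: "2 * (1 - \<alpha> j) * \<gamma> i / s \<le> L"
    proof -
      have "\<gamma> i \<le> Max (\<gamma> ` {i'. cl i' = j})" by (rule Max_ge) (auto simp: j_def)
      then have "2 * (1 - \<alpha> j) * \<gamma> i / s \<le> 2 * (1 - \<alpha> j) * Max (\<gamma> ` {i'. cl i' = j}) / s"
        using aj sp by (intro divide_right_mono mult_left_mono) auto
      also have "\<dots> \<le> Max (range (\<lambda>j. 2 * (1 - \<alpha> j) * Max (\<gamma> ` {i. cl i = j}) / (p0 + 2 * (1 - p0) * p j)))"
        unfolding s_def by (rule Max_ge) auto
      finally show ?thesis unfolding L_def Lconst_def by linarith
    qed
    have Lf3: "Lt / (1 - p0) * (1 / (1 - p j)) \<le> L"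
    proof -
      have "1 / (1 - p j) \<le> Max (range (\<lambda>j. 1 / (1 - p j)))" by (rule Max_ge) auto
      then have "Lt / (1 - p0) * (1 / (1 - p j)) \<le> Lt / (1 - p0) * Max (range (\<lambda>j. 1 / (1 - p j)))"
        using Lt0 p0 by (intro mult_left_mono) auto
      then show ?thesis unfolding L_def Lconst_def by linarith
    qed
    have m: "expect N p0 p (\<lambda>\<xi>0 \<xi> l. Q i \<xi>0 (\<xi> (cl i)) (l i))
      = p0 * ((c1 i)\<^sup>2 * nA) + (1 - p0) * (p j * ((c2 i)\<^sup>2 * nB) + (1 - p j) * ((c3 i)\<^sup>2 * (S / real (N i))))"
    proof -
      have "expect N p0 p (\<lambda>\<xi>0 \<xi> l. Q i \<xi>0 (\<xi> (cl i)) (l i)) =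
        (\<Sum>b0\<in>UNIV. (if b0 then p0 else 1 - p0) * (\<Sum>b\<in>UNIV. (if b then p (cl i) else 1 - p (cl i)) *
        ((\<Sum>m = 1..N i. Q i b0 b m) / real (N i))))"
        by (rule expect_marg[OF N_pos])
      also have "\<dots> = p0 * ((c1 i)\<^sup>2 * nA) + (1 - p0) * (p j * ((c2 i)\<^sup>2 * nB) + (1 - p j) * ((c3 i)\<^sup>2 * (S / real (N i))))"
      proof -
        have Nn: "real (N i) \<noteq> 0" using Ni by simp
        have h1: "(\<Sum>m = 1..N i. Q i True b m) / real (N i) = (c1 i)\<^sup>2 * nA" for b
          using Nn by (simp add: Q_def nA_def)
        have h2: "(\<Sum>m = 1..N i. Q i False True m) / real (N i) = (c2 i)\<^sup>2 * nB"
          using Nn by (simp add: Q_def nB_def)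
        have h3: "(\<Sum>m = 1..N i. Q i False False m) / real (N i) = (c3 i)\<^sup>2 * (S / real (N i))"
          by (simp add: Q_def S_def sum_distrib_left)
        have e: "\<And>x::real. p j * x + (1 - p j) * x = x" by (simp add: algebra_simps)
        have sb: "\<And>f::bool\<Rightarrow>real. sum f UNIV = f True + f False" by (simp add: UNIV_bool)
        show ?thesis unfolding sb if_True if_False h1 h2 h3 j_def[symmetric] e ..
      qed
      finally show ?thesis .
    qed
    have s1: "p0 * ((c1 i)\<^sup>2 * nA) \<le> L * (\<alpha> j * \<gamma> i) * nA"
    proof -
      have ag: "\<alpha> j * \<gamma> i \<ge> 0" using aj gi by simp
      have e: "p0 * ((c1 i)\<^sup>2 * nA) = (\<alpha> j * \<gamma> i) * ((\<alpha> j * \<gamma> i) / p0) * nA"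
        using p0 by (simp add: c1_def j_def power2_eq_square field_simps)
      have "(\<alpha> j * \<gamma> i) / p0 \<le> 2 / p0 * (\<alpha> j * \<gamma> i)" using ag p0 by (simp add: field_simps)
      with Lf1 have "(\<alpha> j * \<gamma> i) / p0 \<le> L" by linarith
      then have "(\<alpha> j * \<gamma> i) * ((\<alpha> j * \<gamma> i) / p0) * nA \<le> (\<alpha> j * \<gamma> i) * L * nA"
        using ag nA0 by (intro mult_right_mono mult_left_mono) auto
      then show ?thesis unfolding e by (simp add: mult_ac)
    qed
    have s2: "(1 - p0) * (p j * ((c2 i)\<^sup>2 * nB)) \<le> L * ((1 - \<alpha> j) * \<gamma> i) * nB"
    proof -
      define k where "k = (1 - \<alpha> j) * \<gamma> i"
      have k0: "k \<ge> 0" unfolding k_def using aj gi by simp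
      have c2e: "c2 i = 2 * k / s"
      proof -
        have t: "1 - tau p0 p j = 2 * (1 - p0) * p j / s"
        proof -
          have "tau p0 p j = p0 / s" unfolding tau_def s_def ..
          then have "1 - tau p0 p j = (s - p0) / s" using sp by (simp add: diff_divide_distrib)
          also have "s - p0 = 2 * (1 - p0) * p j" unfolding s_def by simp
          finally show ?thesis .
        qed
        have "c2 i = \<gamma> i * (2 * (1 - p0) * p j / s) * (1 - \<alpha> j) / ((1 - p0) * p j)"
          unfolding c2_def j_def[symmetric] t ..
        also have "\<dots> = 2 * k / s" unfolding k_def using sp p0 pj by (simp add: field_simps)
        finally show ?thesis .
      qed
      have e: "(1 - p0) * (p j * ((c2 i)\<^sup>2 * nB)) = k * (2 * k / s) * (2 * (1 - p0) * p j / s) * nB"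
        unfolding c2e using sp by (simp add: power2_eq_square field_simps)
      have f1: "2 * (1 - p0) * p j / s \<le> 1" using sp p0 by (simp add: s_def)
      have f2: "2 * k / s \<le> L"
      proof -
        have "2 * k = 2 * (1 - \<alpha> j) * \<gamma> i" unfolding k_def by simp
        then show ?thesis using Lf2 by simp
      qed
      have f3: "2 * k / s \<ge> 0" using k0 sp by simp
      have "k * (2 * k / s) * (2 * (1 - p0) * p j / s) \<le> k * (2 * k / s) * 1"
        using k0 f3 f1 by (intro mult_left_mono mult_nonneg_nonneg) auto
      also have "\<dots> \<le> k * L" using mult_left_mono[OF f2 k0] by simp
      finally have "k * (2 * k / s) * (2 * (1 - p0) * p j / s) * nB \<le> k * L * nB"
        using nB0 by (intro mult_right_mono)
      then show ?thesis unfolding e k_def by (simp add: mult_ac)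
    qed
    have Br0: "Br m \<ge> 0" if "m \<in> {1..N i}" for m
    proof -
      have "\<mu> / 2 * (norm (\<Theta> $ i - X $ i))\<^sup>2 \<ge> 0" using mu_pos by simp
      then show ?thesis using strongly_convex[OF that, of "X $ i" "\<Theta> $ i"] unfolding Br_def by linarith
    qed
    have coco: "(norm (Dm i m))\<^sup>2 \<le> 2 * Lt * Br m" if "m \<in> {1..N i}" for m
      unfolding Dm_def Br_def
    proof (rule cocoercive[OF grad[OF that] smooth[OF that] _ Lt0])
      fix x y
      show "ft i m x + gt i m x \<bullet> (y - x) \<le> ft i m y"
      proof -
        have "\<mu> / 2 * (norm (y - x))\<^sup>2 \<ge> 0" using mu_pos by simp
        then show ?thesis using strongly_convex[OF that, of x y] by linarith
      qed
    qed
    have DfBr: "Df = (\<Sum>m = 1..N i. Br m) / real (N i)"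
    proof -
      have g: "loc_grad N gt i (X $ i) \<bullet> (\<Theta> $ i - X $ i) = (\<Sum>m = 1..N i. gt i m (X $ i) \<bullet> (\<Theta> $ i - X $ i)) / real (N i)"
        unfolding loc_grad_def by (simp add: inner_sum_left divide_inverse mult.commute)
      show ?thesis unfolding Df_def Br_def loc_f_def g
        by (simp add: sum_subtractf diff_divide_distrib)
    qed
    have Df0: "Df \<ge> 0" unfolding DfBr using Br0 by (intro divide_nonneg_nonneg sum_nonneg) auto
    have SN: "S / real (N i) \<le> 2 * Lt * Df"
    proof -
      have "S \<le> (\<Sum>m = 1..N i. 2 * Lt * Br m)" unfolding S_def by (rule sum_mono) (rule coco)
      then have "S / real (N i) \<le> (\<Sum>m = 1..N i. 2 * Lt * Br m) / real (N i)"
        using Ni by (simp add: divide_right_mono)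
      then show ?thesis unfolding DfBr by (simp add: sum_distrib_left)
    qed
    have s3: "(1 - p0) * ((1 - p j) * ((c3 i)\<^sup>2 * (S / real (N i)))) \<le> 2 * L * Df"
    proof -
      define K where "K = 1 / ((1 - p0) * (1 - p j))"
      have K0: "K \<ge> 0" unfolding K_def using p0 pj by simp
      have e: "(1 - p0) * ((1 - p j) * ((c3 i)\<^sup>2 * (S / real (N i)))) = K * (S / real (N i))"
      proof -
        have ab: "1 - p0 \<noteq> 0" "1 - p j \<noteq> 0" using p0 pj by auto
        have "(1 - p0) * ((1 - p j) * (c3 i)\<^sup>2) = K"
          unfolding K_def c3_def j_def[symmetric] using ab by (simp add: power2_eq_square)
        then show ?thesis by (metis mult.assoc)
      qed
      have "K * (S / real (N i)) \<le> K * (2 * Lt * Df)" using mult_left_mono[OF SN K0] .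
      also have "\<dots> = 2 * (Lt / (1 - p0) * (1 / (1 - p j))) * Df" unfolding K_def by simp
      also have "\<dots> \<le> 2 * L * Df"
      proof -
        have "(Lt / (1 - p0) * (1 / (1 - p j))) * Df \<le> L * Df" using mult_right_mono[OF Lf3 Df0] .
        then show ?thesis by linarith
      qed
      finally show ?thesis unfolding e .
    qed
    have Te: "2 * L * T i = 2 * L * Df + L * ((1 - \<alpha> j) * \<gamma> i) * nB + L * (\<alpha> j * \<gamma> i) * nA"
    proof -
      have t: "T i = Df + ((1 - \<alpha> j) * \<gamma> i) / 2 * nB + (\<alpha> j * \<gamma> i) / 2 * nA"
        unfolding T_def Df_def nA_def nB_def j_def by simp
      have gen: "\<And>D k1 k2 x y :: real. 2 * L * (D + k1 / 2 * x + k2 / 2 * y) = 2 * L * D + L * k1 * x + L * k2 * y"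
        by (simp add: algebra_simps)
      show ?thesis unfolding t by (rule gen)
    qed
    have "(1 - p0) * (p j * ((c2 i)\<^sup>2 * nB) + (1 - p j) * ((c3 i)\<^sup>2 * (S / real (N i))))
       = (1 - p0) * (p j * ((c2 i)\<^sup>2 * nB)) + (1 - p0) * ((1 - p j) * ((c3 i)\<^sup>2 * (S / real (N i))))"
      by (simp add: distrib_left)
    then show ?thesis unfolding m Te using s1 s2 s3 by linarith
  qed
  have "(\<Sum>i\<in>UNIV. expect N p0 p (\<lambda>\<xi>0 \<xi> l. Q i \<xi>0 (\<xi> (cl i)) (l i))) \<le> (\<Sum>i\<in>UNIV. 2 * L * T i)"
    by (rule sum_mono) (rule bound)
  then show ?thesis unfolding lhs rhs L_def by (simp add: sum_distrib_left)
qed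

end
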